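(* For all $n\ge1$ and $k\ge1$, the lists $\mathcal{G}(n,k)$ and $\mathcal{C}(1^02^0\cdots n^0)$ are identical. In particular, the greedy min-flip construction visits every element of $\mathbf{C}(n,k)$ exactly once, and its last element is mapped to $1^02^0\cdots n^0$ by $\mathrm{flip}_n$, so it yields a Hamilton cycle in the $k$-sided pancake network.
   Context: Fix integers $n\ge1$, $k\ge1$. A $k$-coloured permutation of $\{1,\dots,n\}$ is a sequence $\pi=p_1\cdots p_n$ with $p_i=v_i^{c_i}$, where $v_1\cdots v_n$ is a permutation of $\{1,\dots,n\}$ and each $c_i\in\{0,\dots,k-1\}$; the set of these is $\mathbf{C}(n,k)$. A pre-perm is a prefix $p_1\cdots p_j$ ($1\le j\le n$) of some element of $\mathbf{C}(n,k)$. For $p=v^c$ and integer $s$, $p^{+s}=v^{(c+s)\bmod k}$; for $\mathbf{p}=p_1\cdots p_j$, $\mathbf{p}^{+s}=p_1^{+s}\cdots p_j^{+s}$. For $1\le i\le n$, $\mathrm{flip}_i(p_1\cdots p_n)=p_i^{+1}\cdots p_1^{+1}p_{i+1}\cdots p_n$. The $k$-sided pancake network is the directed graph on $\mathbf{C}(n,k)$ with an arc from $\pi$ to $\mathrm{flip}_i(\pi)$ for each $1\le i\le n$. For a pre-perm $\mathbf{p}$ of length $j$, $\rho(\mathbf{p})=r_1\cdots r_m$ ($m=kj$) is the concatenation $\mathbf{p}^{+(k-1)}\mathbf{p}^{+(k-2)}\cdots\mathbf{p}^{+0}$ viewed circularly (indices mod $m$), and $\rho(\mathbf{p})_i=r_{i-j+1}\cdots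 r_{i-1}$ (length $j-1$, indices mod $m$). The list $\mathcal{C}(\mathbf{p})$: if $j=1$, $\mathcal{C}(p_1)=p_1^{+0},\dots,p_1^{+(k-1)}$; if $j\ge2$, $\mathcal{C}(\mathbf{p})$ is the concatenation for $i=m,m-1,\dots,1$ of the lists obtained from $\mathcal{C}(\rho(\mathbf{p})_i)$ by appending $r_i$ to every entry. The greedy min-flip list $\mathcal{G}(n,k)$: start with $G_1=1^0\cdots n^0$; having $G_1,\dots,G_t$, let $i$ be the smallest integer in $\{1,\dots,n\}$ with $\mathrm{flip}_i(G_t)\notin\{G_1,\dots,G_t\}$ and set $G_{t+1}=\mathrm{flip}_i(G_t)$; if no such $i$ exists, stop. *)

theory Defs
  imports Main
begin

text \<open>A coloured symbol v^c is the pair (v, c); a k-coloured permutation / pre-perm is a list of them.\<close>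
type_synonym csym = "nat \<times> nat"
type_synonym cperm = "csym list"

definition shift :: "nat \<Rightarrow> nat \<Rightarrow> csym \<Rightarrow> csym" where
  "shift k s p = (fst p, (snd p + s) mod k)"

definition shiftl :: "nat \<Rightarrow> nat \<Rightarrow> cperm \<Rightarrow> cperm" where
  "shiftl k s ps = map (shift k s) ps"

definition colperms :: "nat \<Rightarrow> nat \<Rightarrow> cperm set" where
  "colperms n k = {\<pi>. length \<pi> = n \<and> distinct (map fst \<pi>) \<and> set (map fst \<pi>) = {1..n}
                     \<and> (\<forall>x\<in>set \<pi>. snd x < k)}"

definition flip :: "nat \<Rightarrow> nat \<Rightarrow> cperm \<Rightarrow> cperm" where
  "flip k i \<pi> = shiftl k 1 (rev (take i \<pi>)) @ drop i \<pi>"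

definition ident :: "nat \<Rightarrow> cperm" where
  "ident n = map (\<lambda>v. (v, 0)) [1..<n+1]"

text \<open>rho(p) = p^{+(k-1)} p^{+(k-2)} ... p^{+0}, as a list (0-based storage; r_l = rho ! ((l-1) mod m)).\<close>
definition rho :: "nat \<Rightarrow> cperm \<Rightarrow> cperm" where
  "rho k p = concat (map (\<lambda>s. shiftl k s p) (rev [0..<k]))"

definition rr :: "nat \<Rightarrow> cperm \<Rightarrow> int \<Rightarrow> csym" where
  "rr k p l = rho k p ! nat ((l - 1) mod int (k * length p))"

definition rho_i :: "nat \<Rightarrow> cperm \<Rightarrow> nat \<Rightarrow> cperm" where
  "rho_i k p i = map (\<lambda>t. rr k p (int i - int (length p) + int t)) [1..<length p]"

lemma length_rho_i[simp]: "length (rho_i k p i) = length p - 1"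
  by (simp add: rho_i_def)

text \<open>The list C(p). (The case p = [] never arises and is set to [] arbitrarily.)\<close>
function Clist :: "nat \<Rightarrow> cperm \<Rightarrow> cperm list" where
  "Clist k p =
    (if length p \<le> 1 then
       (if p = [] then [] else map (\<lambda>s. [shift k s (hd p)]) [0..<k])
     else
       concat (map (\<lambda>i. map (\<lambda>x. x @ [rr k p (int i)]) (Clist k (rho_i k p i)))
                   (rev [1..<k * length p + 1])))"
  by pat_completeness auto
termination
  by (relation "measure (\<lambda>(k, p). length p)") auto

text \<open>The fuel argument only bounds the recursion: since all visited
  elements are distinct elements of C(n,k), at most card C(n,k) - 1 steps can occur,
  so fuel card C(n,k) never runs out before the process stops by itself.\<close>
fun greedy_aux :: "nat \<Rightarrow> nat \<Rightarrow> nat \<Rightarrow> cperm list \<Rightarrow> cperm list" where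
  "greedy_aux 0 n k L = L"
| "greedy_aux (Suc f) n k L =
    (if \<exists>i\<in>{1..n}. flip k i (last L) \<notin> set L
     then greedy_aux f n k
            (L @ [flip k (LEAST i. i \<in> {1..n} \<and> flip k i (last L) \<notin> set L) (last L)])
     else L)"

definition greedy :: "nat \<Rightarrow> nat \<Rightarrow> cperm list" where
  "greedy n k = greedy_aux (card (colperms n k)) n k [ident n]"

end

theory Submission
  imports Defs "HOL-Number_Theory.Cong"
begin

lemma mod_add_cancel_lt:
  "(s::nat) < k \<Longrightarrow> s' < k \<Longrightarrow> (c + s) mod k = (c + s') mod k \<Longrightarrow> s = s'"
  using cong_add_lcancel_nat unfolding cong_def by (metis mod_less)


lemma shift_shift: "shift k s (shift k t x) = shift k (s + t) x"
  by (simp add: shift_def mod_add_right_eq add.assoc add.commute add.left_commute)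

lemma snd_shift_lt: "k \<ge> 1 \<Longrightarrow> snd (shift k s x) < k"
  by (simp add: shift_def)

lemma fst_shift[simp]: "fst (shift k s x) = fst x"
  by (simp add: shift_def)

lemma shift_0: "snd x < k \<Longrightarrow> shift k 0 x = x"
  by (cases x) (simp add: shift_def)

lemma shift_k: "shift k k x = shift k 0 x"
  by (cases x) (simp add: shift_def)

lemma length_rho: "length (rho k p) = k * length p"
  by (simp add: rho_def shiftl_def length_concat comp_def sum_list_triv)

lemma nth_concat_const:
  "(\<forall>a\<in>set xs. length (f a) = j) \<Longrightarrow> x < length xs * j \<Longrightarrow>
   concat (map f xs) ! x = f (xs ! (x div j)) ! (x mod j)"
proof (induction xs arbitrary: x)
  case Nil then show ?case by simp
next
  case (Cons a xs)
  show ?case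
  proof (cases "x < j")
    case True then show ?thesis using Cons by (simp add: nth_append)
  next
    case False
    then have "x - j < length xs * j" using Cons.prems by auto
    then have "concat (map f xs) ! (x - j) = f (xs ! ((x-j) div j)) ! ((x-j) mod j)"
      using Cons by auto
    moreover have "x div j = Suc ((x - j) div j)" using False
      using False Cons.prems by (cases j) (auto simp add: le_div_geq)
    moreover have "x mod j = (x-j) mod j" using False by (simp add: le_mod_geq)
    ultimately show ?thesis using Cons False by (simp add: nth_append)
  qed
qed

lemma rho_nth:
  assumes "x < k * length p"
  shows "rho k p ! x = shift k (k - 1 - x div length p) (p ! (x mod length p))"
proof -
  let ?j = "length p"
  have j: "0 < ?j" using assms by (cases ?j) auto
  have xd: "x div ?j < k" using assms by (simp add: less_mult_imp_div_less)
  have "rho k p ! x = shiftl k (rev [0..<k] ! (x div ?j)) p ! (x mod ?j)"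
    unfolding rho_def
    by (rule nth_concat_const) (use assms in \<open>auto simp: shiftl_def mult.commute\<close>)
  also have "rev [0..<k] ! (x div ?j) = k - 1 - x div ?j" using xd by (simp add: rev_nth)
  finally show ?thesis using j by (simp add: shiftl_def)
qed

lemma rr_closed:
  assumes "k \<ge> 1" "length p \<ge> 1"
  shows "rr k p l = shift k (k - 1 - nat ((l - 1) mod int (k * length p)) div length p)
                    (p ! (nat ((l - 1) mod int (k * length p)) mod length p))"
proof -
  have pos: "int (k * length p) > 0" using assms by (simp only: of_nat_mult) (intro mult_pos_pos; auto)
  have "(l - 1) mod int (k * length p) < int (k * length p)"
    using pos by (rule pos_mod_bound)
  moreover have "(l - 1) mod int (k * length p) \<ge> 0" using pos by simp
  ultimately have "nat ((l - 1) mod int (k * length p)) < k * length p"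
    by linarith
  then show ?thesis unfolding rr_def by (rule rho_nth)
qed

lemma rr_shift:
  assumes k: "k \<ge> 1" and j: "length p \<ge> 1"
  shows "rr k p (l - int (length p)) = shift k 1 (rr k p l)"
proof -
  define j where "j = length p"
  define M where "M = k * j"
  have jpos: "j > 0" using j unfolding j_def by linarith
  have Mpos: "int M > 0" using k jpos unfolding M_def by simp
  have jM: "j \<le> M" using k unfolding M_def by simp
  define x where "x = (l - 1) mod int M"
  have x0: "0 \<le> x" and xM: "x < int M" using Mpos unfolding x_def by simp_all
  define y where "y = (l - int j - 1) mod int M"
  have yx: "y = (x - int j) mod int M"
    unfolding x_def y_def by (simp add: mod_diff_left_eq diff_diff_eq2 algebra_simps)
  have L: "rr k p l = shift k (k - 1 - nat x div j) (p ! (nat x mod j))"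
    using rr_closed[OF k j, of l] unfolding x_def M_def j_def by simp
  have R: "rr k p (l - int j) = shift k (k - 1 - nat y div j) (p ! (nat y mod j))"
    using rr_closed[OF k j, of "l - int j"] unfolding y_def M_def j_def by (simp add: algebra_simps)
  have xdk: "nat x div j < k"
    using xM x0 unfolding M_def by (simp add: less_mult_imp_div_less nat_less_iff)
  show ?thesis
  proof (cases "x \<ge> int j")
    case True
    then have "y = x - int j" using yx xM by simp
    then have ny: "nat y = nat x - j" using True by simp
    have "nat x \<ge> j" using True by linarith
    then have d: "nat x div j = Suc (nat y div j)" and m: "nat y mod j = nat x mod j"
      using jpos ny by (simp_all add: le_div_geq le_mod_geq)
    have e: "k - Suc (nat y div j) = Suc (k - Suc (Suc (nat y div j)))" using xdk d by linarith
    show ?thesis unfolding j_def[symmetric] L R using xdk d m e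
      by (simp add: shift_shift)
  next
    case False
    have "y = (x - int j + int M) mod int M" unfolding yx by simp
    moreover have "0 \<le> x - int j + int M" using x0 jM by linarith
    moreover have "x - int j + int M < int M" using False by linarith
    ultimately have "(x - int j + int M) mod int M = x - int j + int M"
      by (intro mod_pos_pos_trivial)
    then have "y = x - int j + int M" using \<open>y = (x - int j + int M) mod int M\<close> by simp
    moreover have "int ((k - 1) * j) = int M - int j"
      using jM unfolding M_def by (simp add: of_nat_diff diff_mult_distrib)
    ultimately have "y = x + int ((k - 1) * j)" by simp
    then have ny: "nat y = nat x + (k - 1) * j" using x0
      by (metis nat_add_distrib nat_int of_nat_0_le_iff)
    have xj: "nat x < j" using False x0 by (simp add: nat_less_iff)
    then have d: "nat y div j = k - 1" and m: "nat y mod j = nat x"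
      using ny jpos by simp_all
    have d2: "nat x div j = 0" using xj by simp
    have m2: "nat x mod j = nat x" using xj by simp
    show ?thesis unfolding j_def[symmetric] L R using d m d2 k m2
      by (simp add: shift_shift shift_k)
  qed
qed

lemma nat_mod_lt: "(0::nat) < n \<Longrightarrow> nat (a mod int n) < n"
  by (simp add: nat_less_iff)

definition okp :: "nat \<Rightarrow> cperm \<Rightarrow> bool" where
  "okp k p = (length p \<ge> 1 \<and> distinct (map fst p) \<and> (\<forall>x\<in>set p. snd x < k))"

definition arr :: "nat \<Rightarrow> cperm \<Rightarrow> cperm set" where
  "arr k p = {\<pi>. length \<pi> = length p \<and> distinct (map fst \<pi>) \<and> set (map fst \<pi>) = set (map fst p)
                \<and> (\<forall>x\<in>set \<pi>. snd x < k)}"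

lemma okp_k: "okp k p \<Longrightarrow> k \<ge> 1"
  unfolding okp_def by (cases p) auto

lemma rr_init:
  assumes "okp k p" "t < length p"
  shows "rr k p (int t + 1 - int (length p)) = p ! t"
proof -
  have k: "k \<ge> 1" using okp_k assms(1) .
  have j: "length p \<ge> 1" using assms(1) okp_def by auto
  have "length p \<le> k * length p" using k by simp
  then have M: "int t < int (k * length p)" using assms(2) by linarith
  have "rr k p (int t + 1) = shift k (k - 1) (p ! t)"
    using rr_closed[OF k j, of "int t + 1"] M assms(2) by simp
  then have "rr k p (int t + 1 - int (length p)) = shift k k (p ! t)"
    using rr_shift[OF k j, of "int t + 1"] k by (simp add: shift_shift)
  also have "\<dots> = p ! t"
  proof -
    have "snd (p ! t) < k" using assms unfolding okp_def by (auto dest: nth_mem)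
    then show ?thesis by (simp add: shift_k shift_0)
  qed
  finally show ?thesis .
qed

lemma fst_rr:
  assumes k: "k \<ge> 1" and j: "length p \<ge> 1"
  shows "fst (rr k p l) = fst (p ! nat ((l - 1) mod int (length p)))"
proof -
  have "((l - 1) mod int (k * length p)) mod int (length p) = (l - 1) mod int (length p)"
    by (simp add: mod_mod_cancel)
  moreover have "0 \<le> (l - 1) mod int (k * length p)"
  proof (intro pos_mod_sign)
    have "0 < k * length p" using k j by (simp del: length_greater_0_conv)
    then show "0 < int (k * length p)" by linarith
  qed
  ultimately have "nat ((l - 1) mod int (k * length p)) mod length p = nat ((l - 1) mod int (length p))"
    using nat_mod_distrib[of "(l - 1) mod int (k * length p)" "int (length p)"] by simp
  then show ?thesis using rr_closed[OF k j, of l] by simp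
qed

lemma snd_rr: "k \<ge> 1 \<Longrightarrow> length p \<ge> 1 \<Longrightarrow> snd (rr k p l) < k"
  using rr_closed[of k p l] snd_shift_lt by simp

lemma window_distinct:
  assumes "okp k p"
  shows "distinct (map (\<lambda>t. fst (rr k p (l + int t))) [0..<length p])"
proof -
  have k: "k \<ge> 1" using okp_k assms .
  have j: "length p \<ge> 1" using assms okp_def by auto
  define j where "j = length p"
  have jp: "int j > 0" using j unfolding j_def by (cases p) auto
  have dp: "distinct (map fst p)" using assms okp_def by auto
  show ?thesis
  proof (subst distinct_conv_nth, intro allI impI)
    fix a b assume a: "a < length (map (\<lambda>t. fst (rr k p (l + int t))) [0..<length p])"
      and b: "b < length (map (\<lambda>t. fst (rr k p (l + int t))) [0..<length p])"
      and ne: "a \<noteq> b"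
    have a': "a < j" and b': "b < j" using a b j_def by auto
    show "map (\<lambda>t. fst (rr k p (l + int t))) [0..<length p] ! a \<noteq>
          map (\<lambda>t. fst (rr k p (l + int t))) [0..<length p] ! b"
    proof
      assume eq: "map (\<lambda>t. fst (rr k p (l + int t))) [0..<length p] ! a =
          map (\<lambda>t. fst (rr k p (l + int t))) [0..<length p] ! b"
      define A where "A = nat ((l + int a - 1) mod int j)"
      define B where "B = nat ((l + int b - 1) mod int j)"
      have A: "A < j" and B: "B < j" using jp unfolding A_def B_def by (simp_all add: nat_less_iff)
      have "fst (p ! A) = fst (p ! B)"
        using eq a' b' fst_rr[OF k j] unfolding A_def B_def j_def by simp
      then have "map fst p ! A = map fst p ! B" using A B j_def by simp
      then have "A = B" using dp A B j_def nth_eq_iff_index_eq by fastforce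
      then have "(l + int a - 1) mod int j = (l + int b - 1) mod int j"
        unfolding A_def B_def using jp by (simp add: nat_eq_iff2)
      then have "(int a) mod int j = (int b) mod int j"
        by (metis add.commute add_diff_eq mod_add_left_eq add_diff_cancel_left' mod_diff_left_eq)
      then have "a = b" using a' b' by (simp add: zmod_int[symmetric])
      then show False using ne by simp
    qed
  qed
qed

lemma window_set:
  assumes "okp k p"
  shows "set (map (\<lambda>t. fst (rr k p (l + int t))) [0..<length p]) = set (map fst p)"
proof (rule card_subset_eq)
  have k: "k \<ge> 1" using okp_k assms .
  have j: "length p \<ge> 1" using assms okp_def by auto
  show "finite (set (map fst p))" by simp
  show "set (map (\<lambda>t. fst (rr k p (l + int t))) [0..<length p]) \<subseteq> set (map fst p)"
  proof
    fix v assume "v \<in> set (map (\<lambda>t. fst (rr k p (l + int t))) [0..<length p])"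
    then obtain t where "v = fst (rr k p (l + int t))" by auto
    then have "v = fst (p ! nat ((l + int t - 1) mod int (length p)))" using fst_rr[OF k j] by simp
    moreover have "nat ((l + int t - 1) mod int (length p)) < length p"
      using j by (intro nat_mod_lt) linarith
    ultimately show "v \<in> set (map fst p)" by simp
  qed
  have c1: "card (set (map (\<lambda>t. fst (rr k p (l + int t))) [0..<length p])) = length p"
    using distinct_card[OF window_distinct[OF assms, of l]] by (simp only: length_map length_upt diff_zero)
  have c2: "card (set (map fst p)) = length p"
    using distinct_card[of "map fst p"] assms okp_def by (simp only: length_map)
  show "card (set (map (\<lambda>t. fst (rr k p (l + int t))) [0..<length p])) = card (set (map fst p))"
    using c1 c2 by (simp only:)
qed

lemma window_eq:
  assumes "length p \<ge> 1"
  shows "map (\<lambda>t. rr k p (int i - int (length p) + 1 + int t)) [0..<length p] = rho_i k p i @ [rr k p (int i)]"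
proof (rule nth_equalityI)
  show "length (map (\<lambda>t. rr k p (int i - int (length p) + 1 + int t)) [0..<length p]) =
        length (rho_i k p i @ [rr k p (int i)])" using assms by simp
  fix t assume "t < length (map (\<lambda>t. rr k p (int i - int (length p) + 1 + int t)) [0..<length p])"
  then have t: "t < length p" by simp
  show "map (\<lambda>t. rr k p (int i - int (length p) + 1 + int t)) [0..<length p] ! t =
        (rho_i k p i @ [rr k p (int i)]) ! t"
  proof (cases "t < length p - 1")
    case True
    then show ?thesis using t by (simp add: nth_append rho_i_def algebra_simps)
  next
    case False
    then have "t = length p - 1" using t by simp
    then show ?thesis using t assms by (simp add: nth_append rho_i_def algebra_simps of_nat_diff)
  qed
qed

lemma window_eq2:
  assumes "k \<ge> 1" "length p \<ge> 1"
  shows "shift k 1 (rr k p (int i)) # rho_i k p i = map (\<lambda>t. rr k p (int i - int (length p) + int t)) [0..<length p]"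
proof -
  have h: "shift k 1 (rr k p (int i)) = rr k p (int i - int (length p))"
    using rr_shift[OF assms, of "int i"] by simp
  show ?thesis unfolding h
  proof (rule nth_equalityI)
    show "length (rr k p (int i - int (length p)) # rho_i k p i) =
      length (map (\<lambda>t. rr k p (int i - int (length p) + int t)) [0..<length p])" using assms by simp
    fix t assume "t < length (rr k p (int i - int (length p)) # rho_i k p i)"
    then have t: "t < length p" using assms by simp
    show "(rr k p (int i - int (length p)) # rho_i k p i) ! t =
      map (\<lambda>t. rr k p (int i - int (length p) + int t)) [0..<length p] ! t"
    proof (cases t)
      case (Suc u)
      then have "[Suc 0..<length p] ! u = Suc u" using t by (simp add: nth_upt)
      then show ?thesis using Suc t by (simp add: rho_i_def algebra_simps)
    qed (use t in simp)
  qed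
qed

lemma rho_i_props:
  assumes "okp k p" "length p \<ge> 2"
  shows "okp k (rho_i k p i)"
    and "set (map fst (rho_i k p i)) = set (map fst p) - {fst (rr k p (int i))}"
    and "fst (rr k p (int i)) \<in> set (map fst p)"
    and "length (rho_i k p i) = length p - 1"
proof -
  have k: "k \<ge> 1" using okp_k assms(1) .
  have j: "length p \<ge> 1" using assms by simp
  let ?l = "int i - int (length p) + 1"
  have w: "map fst (rho_i k p i @ [rr k p (int i)]) = map (\<lambda>t. fst (rr k p (?l + int t))) [0..<length p]"
    unfolding window_eq[OF j, symmetric] by simp
  have d: "distinct (map fst (rho_i k p i @ [rr k p (int i)]))"
    unfolding w using window_distinct[OF assms(1)] .
  have s: "set (map fst (rho_i k p i @ [rr k p (int i)])) = set (map fst p)"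
    unfolding w using window_set[OF assms(1)] .
  show "set (map fst (rho_i k p i)) = set (map fst p) - {fst (rr k p (int i))}"
    using d s by (auto intro: rev_image_eqI)
  show "fst (rr k p (int i)) \<in> set (map fst p)" using s by auto
  show "length (rho_i k p i) = length p - 1" by simp
  have c: "\<forall>x\<in>set (rho_i k p i). snd x < k"
    unfolding rho_i_def using snd_rr[OF k j] by auto
  show "okp k (rho_i k p i)" unfolding okp_def using d c assms(2) by auto
qed

lemma rho_distinct:
  assumes "okp k p"
  shows "distinct (rho k p)"
proof -
  define j where "j = length p"
  have k: "k \<ge> 1" using okp_k assms .
  have jp: "j > 0" using assms unfolding okp_def j_def by auto
  have dp: "distinct (map fst p)" using assms okp_def by auto
  show ?thesis
  proof (subst distinct_conv_nth, intro allI impI)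
    fix x y assume x: "x < length (rho k p)" and y: "y < length (rho k p)" and ne: "x \<noteq> y"
    have x': "x < k * j" and y': "y < k * j" using x y length_rho j_def by auto
    show "rho k p ! x \<noteq> rho k p ! y"
    proof
      assume eq: "rho k p ! x = rho k p ! y"
      have bx: "x mod j < j" and by': "y mod j < j" using jp by auto
      have ax: "x div j < k" and ay: "y div j < k" using x' y' by (simp_all add: less_mult_imp_div_less)
      have e: "shift k (k - 1 - x div j) (p ! (x mod j)) = shift k (k - 1 - y div j) (p ! (y mod j))"
        using eq rho_nth[OF x'[unfolded j_def]] rho_nth[OF y'[unfolded j_def]] j_def by simp
      then have "map fst p ! (x mod j) = map fst p ! (y mod j)"
        using bx by' j_def by (simp add: shift_def)
      then have b: "x mod j = y mod j" using dp bx by' j_def nth_eq_iff_index_eq by fastforce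
      then have "(snd (p ! (x mod j)) + (k - 1 - x div j)) mod k = (snd (p ! (x mod j)) + (k - 1 - y div j)) mod k"
        using e by (simp add: shift_def)
      then have "k - 1 - x div j = k - 1 - y div j"
        by (rule mod_add_cancel_lt[rotated 2]) (use k in auto)
      then have "x div j = y div j" using ax ay by linarith
      then have "x = y" using b by (metis div_mult_mod_eq)
      then show False using ne by simp
    qed
  qed
qed

lemma set_rho:
  assumes "okp k p"
  shows "set (rho k p) = {x. fst x \<in> set (map fst p) \<and> snd x < k}"
proof (rule card_subset_eq)
  have k: "k \<ge> 1" using okp_k assms .
  have fin: "{x. fst x \<in> set (map fst p) \<and> snd x < k} = set (map fst p) \<times> {0..<k}" by force
  show "finite {x. fst x \<in> set (map fst p) \<and> snd x < k}" unfolding fin by simp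
  show "set (rho k p) \<subseteq> {x. fst x \<in> set (map fst p) \<and> snd x < k}"
  proof
    fix x assume "x \<in> set (rho k p)"
    then obtain s y where "y \<in> set p" "x = shift k s y" by (auto simp: rho_def shiftl_def)
    then show "x \<in> {x. fst x \<in> set (map fst p) \<and> snd x < k}" using k snd_shift_lt by auto
  qed
  have "card (set (map fst p)) = length p"
    using distinct_card[of "map fst p"] assms okp_def by (simp only: length_map)
  then have "card {x. fst x \<in> set (map fst p) \<and> snd x < k} = length p * k"
    unfolding fin by (simp add: card_cartesian_product)
  moreover have "card (set (rho k p)) = k * length p"
    using distinct_card[OF rho_distinct[OF assms]] length_rho by simp
  ultimately show "card (set (rho k p)) = card {x. fst x \<in> set (map fst p) \<and> snd x < k}"
    by simp
qed

lemma rr_rho: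
  assumes "1 \<le> i" "i \<le> k * length p"
  shows "rr k p (int i) = rho k p ! (i - 1)"
proof -
  have "(int i - 1) mod int (k * length p) = int i - 1"
  proof (intro mod_pos_pos_trivial)
    have "int i \<le> int (k * length p)" using assms(2) by (simp only: of_nat_le_iff)
    then show "int i - 1 < int (k * length p)" by linarith
  qed (use assms in simp)
  then show ?thesis unfolding rr_def using assms by (simp add: nat_diff_distrib)
qed

lemma rr_inj:
  assumes "okp k p" "1 \<le> i" "i \<le> k * length p" "1 \<le> i'" "i' \<le> k * length p"
    and "rr k p (int i) = rr k p (int i')"
  shows "i = i'"
proof -
  have "rho k p ! (i - 1) = rho k p ! (i' - 1)" using assms rr_rho by metis
  moreover have "i - 1 < length (rho k p)" "i' - 1 < length (rho k p)"
    using assms length_rho by auto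
  ultimately have "i - 1 = i' - 1"
    using nth_eq_iff_index_eq[OF rho_distinct[OF assms(1)]] by blast
  then show ?thesis using assms by simp
qed

lemma rr_surj:
  assumes "okp k p" "fst x \<in> set (map fst p)" "snd x < k"
  shows "\<exists>i\<in>{1..k * length p}. x = rr k p (int i)"
proof -
  have "x \<in> set (rho k p)" using set_rho[OF assms(1)] assms by simp
  then obtain y where y: "y < length (rho k p)" "x = rho k p ! y" by (metis in_set_conv_nth)
  then have "x = rr k p (int (Suc y))" using rr_rho[of "Suc y" k p] length_rho by simp
  then show ?thesis using y length_rho by (intro bexI[of _ "Suc y"]) auto
qed

lemma flip_append: "l \<le> length x \<Longrightarrow> flip k l (x @ [r]) = flip k l x @ [r]"
  by (simp add: flip_def)

lemma flip_full: "flip k (length L) L = q \<Longrightarrow> flip k (Suc (length L)) (L @ [r]) = shift k 1 r # q"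
  by (simp add: flip_def shiftl_def)

lemma flip_arr:
  assumes "\<pi> \<in> arr k p" "k \<ge> 1"
  shows "flip k l \<pi> \<in> arr k p"
proof -
  have m: "map fst (flip k l \<pi>) = rev (take l (map fst \<pi>)) @ drop l (map fst \<pi>)"
    by (simp add: flip_def shiftl_def comp_def take_map drop_map rev_map)
  have d: "distinct (map fst \<pi>)" and s: "set (map fst \<pi>) = set (map fst p)"
    using assms unfolding arr_def by auto
  have "distinct (rev (take l (map fst \<pi>)) @ drop l (map fst \<pi>))"
    using d by (metis distinct_append distinct_rev set_rev append_take_drop_id)
  moreover have "set (rev (take l (map fst \<pi>)) @ drop l (map fst \<pi>)) = set (map fst p)"
    using s by (metis set_append set_rev append_take_drop_id)
  moreover have "length (flip k l \<pi>) = length \<pi>" by (simp add: flip_def shiftl_def)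
  moreover have "\<forall>x\<in>set (flip k l \<pi>). snd x < k"
    using assms unfolding arr_def flip_def shiftl_def
    by (auto simp: snd_shift_lt dest: in_set_dropD)
  ultimately show ?thesis using assms unfolding arr_def m[symmetric] by auto
qed

fun good :: "nat \<Rightarrow> nat \<Rightarrow> cperm set \<Rightarrow> cperm list \<Rightarrow> bool" where
  "good k N V [] = True"
| "good k N V [x] = True"
| "good k N V (x # y # zs) =
     ((\<exists>l\<in>{1..N}. y = flip k l x \<and> (\<forall>i\<in>{1..<l}. flip k i x \<in> insert x V))
      \<and> good k N (insert x V) (y # zs))"

lemma good_mono: "good k N V L \<Longrightarrow> V \<subseteq> V' \<Longrightarrow> N \<le> N' \<Longrightarrow> good k N' V' L"
proof (induction k N V L arbitrary: V' rule: good.induct)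
  case (3 k N V x y zs)
  then show ?case by (auto 4 4 intro: bexI)
qed auto

lemma good_append:
  "good k N V A \<Longrightarrow> good k N (V \<union> set A) B \<Longrightarrow>
   (A \<noteq> [] \<Longrightarrow> B \<noteq> [] \<Longrightarrow> (\<exists>l\<in>{1..N}. hd B = flip k l (last A) \<and>
        (\<forall>i\<in>{1..<l}. flip k i (last A) \<in> V \<union> set A))) \<Longrightarrow>
   good k N V (A @ B)"
proof (induction A arbitrary: V)
  case Nil then show ?case by simp
next
  case (Cons x A)
  show ?case
  proof (cases A)
    case Nil
    then show ?thesis using Cons.prems by (cases B) auto
  next
    case (Cons x' A')
    have g1: "good k N (insert x V) A" and c: "\<exists>l\<in>{1..N}. x' = flip k l x \<and> (\<forall>i\<in>{1..<l}. flip k i x \<in> insert x V)"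
      using Cons.prems(1) Cons by auto
    have e1: "insert x V \<union> set A = V \<union> set (x # A)" by auto
    have e2: "last (x # A) = last A" using Cons by simp
    have "good k N (insert x V) (A @ B)"
    proof (rule Cons.IH[OF g1])
      show "good k N (insert x V \<union> set A) B" unfolding e1 by (rule Cons.prems(2))
      show "A \<noteq> [] \<Longrightarrow> B \<noteq> [] \<Longrightarrow> \<exists>l\<in>{1..N}. hd B = flip k l (last A) \<and>
        (\<forall>i\<in>{1..<l}. flip k i (last A) \<in> insert x V \<union> set A)"
        using Cons.prems(3) unfolding e1 e2[symmetric] by simp
    qed
    then show ?thesis using c Cons by simp
  qed
qed

lemma good_map_app:
  "good k N V L \<Longrightarrow> (\<forall>x\<in>set L. N \<le> length x) \<Longrightarrow>
   good k N ((\<lambda>x. x @ [r]) ` V) (map (\<lambda>x. x @ [r]) L)"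
proof (induction k N V L rule: good.induct)
  case (3 k N V x y zs)
  from 3 obtain l where l: "l \<in> {1..N}" "y = flip k l x" "\<forall>i\<in>{1..<l}. flip k i x \<in> insert x V"
    by auto
  have "N \<le> length x" using 3 by auto
  then have fl: "\<And>i. i \<le> l \<Longrightarrow> flip k i (x @ [r]) = flip k i x @ [r]"
    using l by (intro flip_append) auto
  have "y @ [r] = flip k l (x @ [r])" using fl l by simp
  moreover have "\<forall>i\<in>{1..<l}. flip k i (x @ [r]) \<in> insert (x @ [r]) ((\<lambda>x. x @ [r]) ` V)"
    using l fl by auto
  moreover have "good k N ((\<lambda>x. x @ [r]) ` insert x V) (map (\<lambda>x. x @ [r]) (y # zs))"
    using 3 by auto
  ultimately show ?case using l by auto
qed auto

lemma good_step1:
  "(\<forall>t. Suc t < length L \<longrightarrow> L ! Suc t = flip k 1 (L ! t)) \<Longrightarrow> N \<ge> 1 \<Longrightarrow> good k N V L"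
proof (induction L arbitrary: V rule: induct_list012)
  case (3 x y zs)
  have "good k N (insert x V) (y # zs)"
    using 3(2)[of "insert x V"] 3(3,4) by (metis Suc_less_eq length_Cons nth_Cons_Suc)
  moreover have "y = flip k 1 x" using 3(3)[rule_format, of 0] by simp
  ultimately show ?case using 3 by auto
qed auto

lemma greedy_aux_good:
  assumes "good k n (set L) (x # ys)" "distinct (L @ x # ys)"
    and "\<forall>i\<in>{1..n}. flip k i (last (x # ys)) \<in> set (L @ x # ys)"
    and "f \<ge> length ys"
  shows "greedy_aux f n k (L @ [x]) = L @ x # ys"
  using assms
proof (induction ys arbitrary: L x f)
  case Nil
  then show ?case by (cases f) auto
next
  case (Cons y ys)
  obtain f' where f: "f = Suc f'" using Cons.prems(4) by (cases f) auto
  from Cons.prems(1) obtain l where l: "l \<in> {1..n}" "y = flip k l x"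
      "\<forall>i\<in>{1..<l}. flip k i x \<in> insert x (set L)"
    and g: "good k n (insert x (set L)) (y # ys)" by auto
  have ny: "y \<notin> set (L @ [x])" using Cons.prems(2) by auto
  have ex: "\<exists>i\<in>{1..n}. flip k i (last (L @ [x])) \<notin> set (L @ [x])" using l ny by auto
  have least: "(LEAST i. i \<in> {1..n} \<and> flip k i (last (L @ [x])) \<notin> set (L @ [x])) = l"
  proof (rule Least_equality)
    show "l \<in> {1..n} \<and> flip k l (last (L @ [x])) \<notin> set (L @ [x])" using l ny by simp
    fix i assume "i \<in> {1..n} \<and> flip k i (last (L @ [x])) \<notin> set (L @ [x])"
    then show "l \<le> i" using l(3) by (metis atLeastAtMost_iff atLeastLessThan_iff last_snoc
        not_le_imp_less set_append Un_insert_right list.set(1) list.set(2) sup_bot.right_neutral sup_commute)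
  qed
  have "greedy_aux f n k (L @ [x]) = greedy_aux f' n k ((L @ [x]) @ [y])"
    using f ex least l(2) by simp
  also have "\<dots> = (L @ [x]) @ y # ys"
    by (rule Cons.IH) (use g Cons.prems f in auto)
  finally show ?case by simp
qed

lemma rr_period: "rr k p (l + int (k * length p)) = rr k p l"
proof -
  have "(l + int (k * length p) - 1) mod int (k * length p) = (l - 1) mod int (k * length p)"
    by (metis add.commute add_diff_eq mod_add_self1)
  then show ?thesis unfolding rr_def by simp
qed

declare Clist.simps[simp del]

definition props :: "nat \<Rightarrow> cperm \<Rightarrow> bool" where
  "props k p = (Clist k p \<noteq> [] \<and> hd (Clist k p) = p \<and> flip k (length p) (last (Clist k p)) = p
     \<and> set (Clist k p) = arr k p \<and> distinct (Clist k p) \<and> good k (length p) {} (Clist k p))"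

lemma props_base:
  assumes "okp k [a]"
  shows "props k [a]"
proof -
  have k: "k \<ge> 1" using okp_k assms .
  have ak: "snd a < k" using assms okp_def by auto
  have C: "Clist k [a] = map (\<lambda>s. [shift k s a]) [0..<k]" by (subst Clist.simps) simp
  have ne: "Clist k [a] \<noteq> []" using k C by simp
  have hd: "hd (Clist k [a]) = [a]" using k C shift_0[OF ak] by (simp add: hd_map)
  have "last (Clist k [a]) = [shift k (k - 1) a]" using k C by (simp add: last_map)
  then have last: "flip k (length [a]) (last (Clist k [a])) = [a]"
    using k shift_0[OF ak] shift_k by (simp add: flip_def shiftl_def shift_shift)
  have inj: "inj_on (\<lambda>s. [shift k s a]) {0..<k}"
    by (rule inj_onI) (auto simp: shift_def intro: mod_add_cancel_lt)
  have dist: "distinct (Clist k [a])" unfolding C using inj by (simp add: distinct_map)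
  have set: "set (Clist k [a]) = arr k [a]"
  proof
    show "set (Clist k [a]) \<subseteq> arr k [a]" unfolding C arr_def using k
      by (auto simp: shift_def)
    show "arr k [a] \<subseteq> set (Clist k [a])"
    proof
      fix \<pi> assume "\<pi> \<in> arr k [a]"
      then obtain b where b: "\<pi> = [b]" "fst b = fst a" "snd b < k"
        unfolding arr_def by (auto simp: length_Suc_conv)
      define s where "s = (snd b + k - snd a) mod k"
      have "(snd a + s) mod k = (snd a + (snd b + k - snd a)) mod k"
        unfolding s_def by (simp add: mod_add_right_eq)
      also have "\<dots> = snd b" using ak b by simp
      finally have "shift k s a = b" using b by (cases a, cases b) (simp add: shift_def)
      moreover have "s < k" using k unfolding s_def by simp
      ultimately show "\<pi> \<in> set (Clist k [a])" unfolding C b by auto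
    qed
  qed
  have good: "good k (length [a]) {} (Clist k [a])"
  proof (rule good_step1)
    show "\<forall>t. Suc t < length (Clist k [a]) \<longrightarrow> Clist k [a] ! Suc t = flip k 1 (Clist k [a] ! t)"
    proof (intro allI impI)
      fix t assume "Suc t < length (Clist k [a])"
      then have t: "Suc t < k" unfolding C by simp
      have f: "flip k 1 [x] = [shift k 1 x]" for x by (simp add: flip_def shiftl_def)
      have "Clist k [a] ! Suc t = [shift k (Suc t) a]" unfolding C using t by (simp only: nth_map length_upt nth_upt) simp
      moreover have "Clist k [a] ! t = [shift k t a]" unfolding C using t by (simp only: nth_map length_upt nth_upt) simp
      ultimately show "Clist k [a] ! Suc t = flip k 1 (Clist k [a] ! t)" using f shift_shift by simp
    qed
  qed simp
  show ?thesis unfolding props_def using ne hd last set dist good by blast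
qed

lemma props_step:
  assumes ok: "okp k p" and j2: "length p \<ge> 2"
    and IH: "\<And>i. i \<in> {1..k * length p} \<Longrightarrow> props k (rho_i k p i)"
  shows "props k p"
proof -
  define j where "j = length p"
  define m where "m = k * j"
  define r where "r = (\<lambda>i::nat. rr k p (int i))"
  define q where "q = (\<lambda>i::nat. rho_i k p i)"
  define B where "B = (\<lambda>i. map (\<lambda>x. x @ [r i]) (Clist k (q i)))"
  define D where "D = (\<lambda>u. concat (map B (rev [1..<u+1])))"
  have k: "k \<ge> 1" using okp_k ok .
  have j1: "length p \<ge> 1" using j2 by simp
  have mpos: "m \<ge> 1" using k j2 unfolding m_def j_def by simp
  have C: "Clist k p = D m"
    using j2 unfolding D_def B_def m_def j_def r_def q_def by (subst Clist.simps) simp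
  have P: "\<And>i. i \<in> {1..m} \<Longrightarrow> props k (q i)" using IH unfolding q_def m_def j_def by simp
  have okq: "\<And>i. okp k (q i)" using rho_i_props(1)[OF ok j2] unfolding q_def by simp
  have lq: "\<And>i. length (q i) = j - 1" unfolding q_def j_def by simp
  have Bne: "\<And>i. i \<in> {1..m} \<Longrightarrow> B i \<noteq> []" using P unfolding B_def props_def by simp
  have Bset: "\<And>i. i \<in> {1..m} \<Longrightarrow> set (B i) = (\<lambda>x. x @ [r i]) ` arr k (q i)"
    using P unfolding B_def props_def by simp
  have Bdist: "\<And>i. i \<in> {1..m} \<Longrightarrow> distinct (B i)"
    using P unfolding B_def props_def by (simp add: distinct_map inj_on_def)
  have Blast: "\<And>i y. i \<in> {1..m} \<Longrightarrow> y \<in> set (B i) \<Longrightarrow> last y = r i"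
    using Bset by auto
  have Bgood: "\<And>i V. i \<in> {1..m} \<Longrightarrow> good k j V (B i)"
  proof -
    fix i V assume i: "i \<in> {1..m}"
    have g: "good k (j - 1) {} (Clist k (q i))" using P[OF i] lq unfolding props_def by simp
    have "\<forall>x\<in>set (Clist k (q i)). j - 1 \<le> length x"
      using P[OF i] lq unfolding props_def arr_def by simp
    then have "good k (j - 1) ((\<lambda>x. x @ [r i]) ` {}) (B i)"
      unfolding B_def by (rule good_map_app[OF g])
    then show "good k j V (B i)" by (rule good_mono) auto
  qed
  have Bhd: "\<And>i. i \<in> {1..m} \<Longrightarrow> hd (B i) = q i @ [r i]"
    using P Bne unfolding B_def props_def by (simp add: hd_map)
  have Blastx: "\<And>i. i \<in> {1..m} \<Longrightarrow> last (B i) = last (Clist k (q i)) @ [r i]"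
    using P unfolding B_def props_def by (simp add: last_map)
  have lastin: "\<And>i. i \<in> {1..m} \<Longrightarrow> last (Clist k (q i)) \<in> arr k (q i)"
    using P unfolding props_def by (metis last_in_set)
  have Bflip: "\<And>i. i \<in> {1..m} \<Longrightarrow> flip k j (last (B i)) = shift k 1 (r i) # q i"
  proof -
    fix i assume i: "i \<in> {1..m}"
    have len: "length (last (Clist k (q i))) = j - 1" using lastin[OF i] lq unfolding arr_def by simp
    have "flip k (length (last (Clist k (q i)))) (last (Clist k (q i))) = q i"
      using P[OF i] len lq unfolding props_def by simp
    from flip_full[OF this, of "r i"]
    have "flip k (Suc (j - 1)) (last (Clist k (q i)) @ [r i]) = shift k 1 (r i) # q i"
      unfolding len .
    moreover have "Suc (j - 1) = j" using j2 j_def by simp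
    ultimately show "flip k j (last (B i)) = shift k 1 (r i) # q i"
      unfolding Blastx[OF i] by simp
  qed
  have Bclosed: "\<And>i l. i \<in> {1..m} \<Longrightarrow> l \<in> {1..<j} \<Longrightarrow> flip k l (last (B i)) \<in> set (B i)"
  proof -
    fix i l assume i: "i \<in> {1..m}" and l: "l \<in> {1..<j}"
    have len: "length (last (Clist k (q i))) = j - 1" using lastin[OF i] lq unfolding arr_def by simp
    have "flip k l (last (B i)) = flip k l (last (Clist k (q i))) @ [r i]"
      unfolding Blastx[OF i] using l len by (intro flip_append) auto
    moreover have "flip k l (last (Clist k (q i))) \<in> arr k (q i)" using flip_arr[OF lastin[OF i] k] .
    ultimately show "flip k l (last (B i)) \<in> set (B i)" using Bset[OF i] by simp
  qed
  have junction: "\<And>u. 1 \<le> u \<Longrightarrow> Suc u \<le> m \<Longrightarrow> hd (B u) = flip k j (last (B (Suc u)))"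
  proof -
    fix u assume u: "1 \<le> u" "Suc u \<le> m"
    have "hd (B u) = map (\<lambda>t. rr k p (int u - int j + 1 + int t)) [0..<j]"
      using Bhd[of u] u window_eq[OF j1, of k u] unfolding q_def r_def j_def by simp
    moreover have "flip k j (last (B (Suc u))) = map (\<lambda>t. rr k p (int (Suc u) - int j + int t)) [0..<j]"
      using Bflip[of "Suc u"] u window_eq2[OF k j1, of "Suc u"] unfolding q_def r_def j_def by simp
    ultimately show "hd (B u) = flip k j (last (B (Suc u)))" by (simp add: algebra_simps)
  qed
  have Dsuc: "\<And>u. D (Suc u) = B (Suc u) @ D u" unfolding D_def by simp
  have Dset: "\<And>u. set (D u) = (\<Union>i\<in>{1..u}. set (B i))"
  proof -
    fix u
    have "set (rev [1..<u+1]) = {1..u}" by auto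
    then show "set (D u) = (\<Union>i\<in>{1..u}. set (B i))" unfolding D_def by simp
  qed
  have Dmain: "u \<le> m \<Longrightarrow> distinct (D u) \<and> (\<forall>V. good k j V (D u)) \<and> (1 \<le> u \<longrightarrow> D u \<noteq> [] \<and> hd (D u) = hd (B u))" for u
  proof (induction u)
    case 0 then show ?case unfolding D_def by simp
  next
    case (Suc u)
    have i: "Suc u \<in> {1..m}" using Suc by simp
    have IHu: "distinct (D u)" "\<And>V. good k j V (D u)" "1 \<le> u \<Longrightarrow> D u \<noteq> [] \<and> hd (D u) = hd (B u)"
      using Suc by auto
    have disj: "set (B (Suc u)) \<inter> set (D u) = {}"
    proof (rule ccontr)
      assume "set (B (Suc u)) \<inter> set (D u) \<noteq> {}"
      then obtain y i' where y: "y \<in> set (B (Suc u))" "i' \<in> {1..u}" "y \<in> set (B i')"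
        unfolding Dset by blast
      have "r (Suc u) = r i'" using Blast[OF i y(1)] Blast[of i' y] y Suc.prems by auto
      then have "Suc u = i'" using rr_inj[OF ok, of "Suc u" i'] y(2) Suc.prems
        unfolding r_def m_def j_def by auto
      then show False using y(2) by simp
    qed
    have dist: "distinct (D (Suc u))" unfolding Dsuc using Bdist[OF i] IHu(1) disj by simp
    have good: "good k j V (D (Suc u))" for V
      unfolding Dsuc
    proof (rule good_append)
      show "good k j V (B (Suc u))" using Bgood[OF i] .
      show "good k j (V \<union> set (B (Suc u))) (D u)" using IHu(2) .
      assume "B (Suc u) \<noteq> []" "D u \<noteq> []"
      then have u1: "1 \<le> u" unfolding D_def by (cases u) auto
      have "hd (D u) = flip k j (last (B (Suc u)))"
        using IHu(3)[OF u1] junction[OF u1] Suc.prems by simp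
      moreover have "\<forall>i\<in>{1..<j}. flip k i (last (B (Suc u))) \<in> V \<union> set (B (Suc u))"
        using Bclosed[OF i] by auto
      moreover have "j \<in> {1..j}" using j2 j_def by simp
      ultimately show "\<exists>l\<in>{1..j}. hd (D u) = flip k l (last (B (Suc u))) \<and>
          (\<forall>i\<in>{1..<l}. flip k i (last (B (Suc u))) \<in> V \<union> set (B (Suc u)))" by blast
    qed
    have "D (Suc u) \<noteq> [] \<and> hd (D (Suc u)) = hd (B (Suc u))"
      unfolding Dsuc using Bne[OF i] by simp
    then show ?case using dist good by simp
  qed
  have DM: "distinct (D m)" "good k j {} (D m)" "D m \<noteq> []" "hd (D m) = hd (B m)"
    using Dmain[of m] mpos by auto
  have hdC: "hd (Clist k p) = p"
  proof -
    have "hd (Clist k p) = map (\<lambda>t. rr k p (int m - int j + 1 + int t)) [0..<j]"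
      using C DM Bhd[of m] mpos window_eq[OF j1, of k m] unfolding q_def r_def j_def by simp
    also have "\<dots> = map (\<lambda>t. p ! t) [0..<j]"
    proof (rule map_cong[OF refl])
      fix t assume "t \<in> set [0..<j]"
      then have t: "t < j" by simp
      have "rr k p (int m - int j + 1 + int t) = rr k p ((int t + 1 - int (length p)) + int (k * length p))"
        unfolding m_def j_def by (simp add: algebra_simps)
      also have "\<dots> = p ! t" using rr_period rr_init[OF ok] t j_def by simp
      finally show "rr k p (int m - int j + 1 + int t) = p ! t" .
    qed
    also have "\<dots> = p" unfolding j_def by (rule map_nth)
    finally show ?thesis .
  qed
  have lastC: "flip k (length p) (last (Clist k p)) = p"
  proof -
    have "[1..<m+1] = 1 # [Suc 1..<m+1]" using mpos by (intro upt_conv_Cons) simp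
    then have "rev [1..<m+1] = rev [Suc 1..<m+1] @ [1]" by (simp only: rev.simps)
    then have "D m = concat (map B (rev [Suc 1..<m+1])) @ B 1" unfolding D_def by (simp del: upt_Suc)
    then have "last (D m) = last (B 1)" using Bne[of 1] mpos by simp
    then have "flip k (length p) (last (Clist k p)) = shift k 1 (r 1) # q 1"
      using C Bflip[of 1] mpos j_def by simp
    also have "\<dots> = map (\<lambda>t. rr k p (1 - int j + int t)) [0..<j]"
      using window_eq2[OF k j1, of 1] unfolding q_def r_def j_def by simp
    also have "\<dots> = map (\<lambda>t. p ! t) [0..<j]"
      using rr_init[OF ok] j_def by (intro map_cong) (auto simp: algebra_simps)
    also have "\<dots> = p" unfolding j_def by (rule map_nth)
    finally show ?thesis .
  qed
  have setC: "set (Clist k p) = arr k p"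
  proof
    show "set (Clist k p) \<subseteq> arr k p"
    proof
      fix \<pi> assume "\<pi> \<in> set (Clist k p)"
      then obtain i y where i: "i \<in> {1..m}" and y: "y \<in> arr k (q i)" and pi: "\<pi> = y @ [r i]"
        unfolding C Dset using Bset by auto
      have s: "set (map fst (q i)) = set (map fst p) - {fst (r i)}" and f: "fst (r i) \<in> set (map fst p)"
        using rho_i_props(2,3)[OF ok j2, of i] unfolding q_def r_def by auto
      have "snd (r i) < k" using snd_rr[OF k j1] unfolding r_def by simp
      then show "\<pi> \<in> arr k p" using y s f lq j2 unfolding pi arr_def j_def by auto
    qed
    show "arr k p \<subseteq> set (Clist k p)"
    proof
      fix \<pi> assume pa: "\<pi> \<in> arr k p"
      then have "\<pi> \<noteq> []" using j2 unfolding arr_def by auto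
      then obtain y x where pi: "\<pi> = y @ [x]" by (metis append_butlast_last_id)
      have xs: "fst x \<in> set (map fst p)" "snd x < k" using pa unfolding pi arr_def by auto
      obtain i where i: "i \<in> {1..m}" and xi: "x = r i"
        using rr_surj[OF ok xs] unfolding r_def m_def j_def by auto
      have s: "set (map fst (q i)) = set (map fst p) - {fst (r i)}"
        using rho_i_props(2)[OF ok j2, of i] unfolding q_def r_def by auto
      have dy: "distinct (map fst y)" and nx: "fst x \<notin> set (map fst y)"
        and sy: "insert (fst x) (set (map fst y)) = set (map fst p)"
        and ly: "length y = j - 1" and cy: "\<forall>z\<in>set y. snd z < k"
        using pa unfolding pi arr_def j_def by auto
      have "set (map fst y) = set (map fst (q i))" using s sy nx xi by blast
      then have "y \<in> arr k (q i)" using dy ly cy lq unfolding arr_def by simp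
      then have "\<pi> \<in> set (B i)" using Bset[OF i] pi xi by auto
      then show "\<pi> \<in> set (Clist k p)" unfolding C Dset using i by auto
    qed
  qed
  show ?thesis unfolding props_def using C DM hdC lastC setC j_def by simp
qed

lemma Clist_props: "okp k p \<Longrightarrow> props k p"
proof (induction k p rule: Clist.induct)
  case (1 k p)
  show ?case
  proof (cases "length p \<le> 1")
    case True
    then have "length p = 1" using "1.prems" okp_def by auto
    then obtain a where "p = [a]" by (auto simp: length_Suc_conv)
    then show ?thesis using props_base "1.prems" by simp
  next
    case False
    then have j2: "length p \<ge> 2" by simp
    show ?thesis
    proof (rule props_step[OF "1.prems" j2])
      fix i assume i: "i \<in> {1..k * length p}"
      then have "i \<in> set (rev [1..<k * length p + 1])" by (simp del: upt_Suc)
      moreover have "okp k (rho_i k p i)" using rho_i_props(1)[OF "1.prems" j2] .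
      ultimately show "props k (rho_i k p i)" using "1.IH" False by blast
    qed
  qed
qed

lemma okp_ident: "n \<ge> 1 \<Longrightarrow> k \<ge> 1 \<Longrightarrow> okp k (ident n)"
  unfolding okp_def ident_def by (auto simp: comp_def distinct_map)

lemma arr_ident: "arr k (ident n) = colperms n k"
proof -
  have "set (map fst (ident n)) = {1..n}" unfolding ident_def by (auto simp: comp_def)
  moreover have "length (ident n) = n" unfolding ident_def by simp
  ultimately show ?thesis unfolding arr_def colperms_def by simp
qed

theorem corollary5:
  fixes n k :: nat
  assumes "n \<ge> 1" and "k \<ge> 1"
  shows "greedy n k = Clist k (ident n)
         \<and> distinct (greedy n k)
         \<and> set (greedy n k) = colperms n k
         \<and> flip k n (last (greedy n k)) = ident n"
proof -
  define C where "C = Clist k (ident n)"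
  have P: "props k (ident n)" using Clist_props okp_ident assms by blast
  have ln: "length (ident n) = n" unfolding ident_def by simp
  have ne: "C \<noteq> []" and hd: "hd C = ident n" and fl: "flip k n (last C) = ident n"
    and st: "set C = colperms n k" and ds: "distinct C" and gd: "good k n {} C"
    using P unfolding props_def C_def arr_ident ln by auto
  have Ceq: "C = ident n # tl C" using ne hd by (cases C) auto
  have G: "greedy_aux (card (colperms n k)) n k ([] @ [ident n]) = [] @ ident n # tl C"
  proof (rule greedy_aux_good)
    show "good k n (set []) (ident n # tl C)" using gd Ceq by simp
    show "distinct ([] @ ident n # tl C)" using ds Ceq by simp
    show "\<forall>i\<in>{1..n}. flip k i (last (ident n # tl C)) \<in> set ([] @ ident n # tl C)"
    proof
      fix i
      have "last C \<in> arr k (ident n)" using st ne arr_ident last_in_set by metis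
      then have "flip k i (last C) \<in> arr k (ident n)" using flip_arr assms(2) by blast
      then show "flip k i (last (ident n # tl C)) \<in> set ([] @ ident n # tl C)"
        using st arr_ident Ceq by simp
    qed
    have "card (colperms n k) = length C" using st ds distinct_card by metis
    then show "length (tl C) \<le> card (colperms n k)" by simp
  qed
  have "greedy n k = C" using G Ceq unfolding greedy_def by simp
  then show ?thesis using ds st fl C_def by simp
qed

end
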